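(* Let $\mathcal{R}$ be a TRS and $\ell \to r$ a left-linear rewrite rule. Consider a local peak $\Gamma$ of the form $t \;{}_{\mathcal{R}}\!\overset{P}{\Leftarrow}\; s \xrightarrow{\epsilon}_{\{\ell \to r\}} u$, together with a fixed choice of the rules $\ell_p \to r_p \in \mathcal{R}$ used at the positions $p \in P$ in the parallel step $s \overset{P}{\Rightarrow}_\mathcal{R} t$. (a) If $\Gamma$ is orthogonal, then there exist a term $v$ and a set $P'$ of pairwise parallel positions such that $t = v$ or $t \xrightarrow{\epsilon}_{\{\ell\to r\}} v$, and $u \overset{P'}{\Rightarrow}_\mathcal{R} v$, and $\mathcal{V}ar(v,P') \subseteq \mathcal{V}ar(s,P)$. (b) If $\Gamma$ is not orthogonal, then there exist a parallel critical peak $t_0 \;{}_{\mathcal{R}}\!\overset{P_0}{\Leftarrow}\; s_0 \xrightarrow{\epsilon}_{\{\ell \to r\}} u_0$ between $\mathcal{R}$ and $\{\ell \to r\}$ and substitutions $\sigma$, $\tau$ such that $s = s_0\sigma$, $t = t_0\tau$, $u = u_0\sigma$, $\sigma \Rightarrow_\mathcal{R} \tau$, $t_0\sigma \overset{P\setminus P_0}{\Rightarrow}_\mathcal{R} t_0\tau$, and $P_0 \subseteq P$.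
   Context: Terms are built from a signature $\mathcal{F}$ and variables $\mathcal{V}$. A rule $\ell\to r$ requires $\ell\notin\mathcal{V}$ and $\mathcal{V}ar(r)\subseteq\mathcal{V}ar(\ell)$; a TRS is a set of rules, $\to_\mathcal{R}$ its rewrite relation, and $s \xrightarrow{p}_\mathcal{R} t$ denotes a step at position $p$ ($\epsilon$ is the root position). A rule is left-linear if no variable occurs twice in $\ell$. Positions $p,q$ are parallel if neither is a prefix of the other. $\mathcal{P}os_\mathcal{F}(t)$ is the set of positions of function symbols in $t$. Parallel step: for a set $P$ of pairwise parallel positions of $s$, $s \overset{P}{\Rightarrow}_\mathcal{R} t$ holds iff for every $p\in P$ there are a rule $\ell'\to r'\in\mathcal{R}$ and a substitution $\mu$ with $s|_p=\ell'\mu$ and $t|_p=r'\mu$, and $t$ coincides with $s$ outside the positions in $P$ (i.e. $t = s[t|_p]_{p\in P}$); $P=\varnothing$ gives $s=t$. $s\Rightarrow_\mathcal{R} t$ means $s \overset{P}{\Rightarrow}_\mathcal{R} t$ for some $P$, and $t \;{}_{\mathcal{R}}\!\overset{P}{\Leftarrow}\; s$ means $s \overset{P}{\Rightarrow}_\mathcal{R} t$. For substitutions, $\sigma\Rightarrow_\mathcal{R}\tau$ means $x\sigma\Rightarrow_\mathcal{R}x\tau$ for all variables $x$. $\mathcal{V}ar(t,P)=\bigcup_{p\in P}\mathcal{V}ar(t|_p)$. A local peak $t \;{}_{\mathcal{R}}\!\overset{P}{\Leftarrow}\; s \xrightarrow{\epsilon}_{\{\ell\to r\}} u$ using rule $\ell_p\to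 r_p$ at each $p\in P$ is orthogonal if either $P\cap\mathcal{P}os_\mathcal{F}(\ell)=\varnothing$, or $P=\{\epsilon\}$ and $\ell_\epsilon\to r_\epsilon$ is a variant of $\ell\to r$ (a variant is a rule obtained by a variable renaming). Parallel critical peak between TRSs $\mathcal{R}$ and $\mathcal{S}$: let $\ell\to r$ be a variant of an $\mathcal{S}$-rule, $P\subseteq\mathcal{P}os_\mathcal{F}(\ell)$ a non-empty set of pairwise parallel positions, and for each $p\in P$ let $\ell_p\to r_p$ be a variant of an $\mathcal{R}$-rule, such that none of the rules $\ell\to r$, $\ell_p\to r_p$ ($p\in P$) shares a variable with another, $\sigma$ is a most general unifier of $\{\ell_p\approx\ell|_p\}_{p\in P}$, and if $P=\{\epsilon\}$ then $\ell_\epsilon\to r_\epsilon$ is not a variant of $\ell\to r$. Then the peak $(\ell\sigma)[r_p\sigma]_{p\in P} \;{}_{\mathcal{R}}\!\overset{P}{\Leftarrow}\; \ell\sigma \xrightarrow{\epsilon}_\mathcal{S} r\sigma$ is a parallel critical peak between $\mathcal{R}$ and $\mathcal{S}$. *)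

theory Defs
  imports Main
begin

datatype ('f, 'v) "term" = Var 'v | Fun 'f "('f, 'v) term list"

type_synonym pos = "nat list"
type_synonym ('f, 'v) rule = "('f, 'v) term \<times> ('f, 'v) term"
type_synonym ('f, 'v) subst = "'v \<Rightarrow> ('f, 'v) term"

fun vars_term :: "('f, 'v) term \<Rightarrow> 'v set" where
  "vars_term (Var x) = {x}"
| "vars_term (Fun f ss) = \<Union> (vars_term ` set ss)"

fun subst_apply :: "('f, 'v) term \<Rightarrow> ('f, 'v) subst \<Rightarrow> ('f, 'v) term" (infixl "\<cdot>" 67) where
  "Var x \<cdot> \<sigma> = \<sigma> x"
| "Fun f ss \<cdot> \<sigma> = Fun f (map (\<lambda>t. t \<cdot> \<sigma>) ss)"

definition subst_comp :: "('f, 'v) subst \<Rightarrow> ('f, 'v) subst \<Rightarrow> ('f, 'v) subst" where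
  "subst_comp \<sigma> \<delta> = (\<lambda>x. \<sigma> x \<cdot> \<delta>)"

text \<open>Subterm at a position (the Var case for non-empty positions is junk).\<close>
fun subt_at :: "('f, 'v) term \<Rightarrow> pos \<Rightarrow> ('f, 'v) term" (infixl "|'_" 67) where
  "subt_at s [] = s"
| "subt_at (Fun f ss) (i # p) = subt_at (ss ! i) p"
| "subt_at (Var x) (i # p) = Var x"

lemma size_nth_less: "i < length ss \<Longrightarrow> size (ss ! i) < Suc (size_list size ss)"
  by (metis less_Suc_eq_le nth_mem size_list_estimation' order_refl)

function poss :: "('f, 'v) term \<Rightarrow> pos set" where
  "poss (Var x) = {[]}"
| "poss (Fun f ss) = insert [] (\<Union>i\<in>{..<length ss}. (\<lambda>p. i # p) ` poss (ss ! i))"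
  by pat_completeness auto
termination
  by (relation "measure size") (auto simp: size_nth_less)

function fun_poss :: "('f, 'v) term \<Rightarrow> pos set" where
  "fun_poss (Var x) = {}"
| "fun_poss (Fun f ss) = insert [] (\<Union>i\<in>{..<length ss}. (\<lambda>p. i # p) ` fun_poss (ss ! i))"
  by pat_completeness auto
termination
  by (relation "measure size") (auto simp: size_nth_less)

text \<open>Parallel replacement \<open>s[f p]_{p \<in> P}\<close> (meaningful when \<open>P\<close> is a set of pairwise
  parallel positions of \<open>s\<close>).\<close>
function par_replace :: "('f, 'v) term \<Rightarrow> pos set \<Rightarrow> (pos \<Rightarrow> ('f, 'v) term) \<Rightarrow> ('f, 'v) term" where
  "par_replace s P g =
     (if [] \<in> P then g []
      else (case s of Var x \<Rightarrow> Var x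
           | Fun f ss \<Rightarrow> Fun f (map (\<lambda>i. par_replace (ss ! i) {q. i # q \<in> P} (\<lambda>q. g (i # q)))
                                 [0..<length ss])))"
  by pat_completeness auto
termination
  by (relation "measure (\<lambda>(s, _, _). size s)") (auto simp: size_nth_less)

definition prefix_pos :: "pos \<Rightarrow> pos \<Rightarrow> bool" where
  "prefix_pos p q \<longleftrightarrow> (\<exists>r. q = p @ r)"

definition parallel_pos :: "pos \<Rightarrow> pos \<Rightarrow> bool" where
  "parallel_pos p q \<longleftrightarrow> \<not> prefix_pos p q \<and> \<not> prefix_pos q p"

definition pairwise_parallel :: "pos set \<Rightarrow> bool" where
  "pairwise_parallel P \<longleftrightarrow> (\<forall>p\<in>P. \<forall>q\<in>P. p \<noteq> q \<longrightarrow> parallel_pos p q)"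

definition vars_at :: "('f, 'v) term \<Rightarrow> pos set \<Rightarrow> 'v set" where
  "vars_at t P = (\<Union>p\<in>P. vars_term (t |_ p))"

definition wf_rule :: "('f, 'v) rule \<Rightarrow> bool" where
  "wf_rule lr \<longleftrightarrow> (\<forall>x. fst lr \<noteq> Var x) \<and> vars_term (snd lr) \<subseteq> vars_term (fst lr)"

definition wf_trs :: "('f, 'v) rule set \<Rightarrow> bool" where
  "wf_trs R \<longleftrightarrow> (\<forall>lr\<in>R. wf_rule lr)"

definition left_linear_term :: "('f, 'v) term \<Rightarrow> bool" where
  "left_linear_term l \<longleftrightarrow> (\<forall>p\<in>poss l. \<forall>q\<in>poss l. \<forall>x.
      l |_ p = Var x \<and> l |_ q = Var x \<longrightarrow> p = q)"

definition left_linear_rule :: "('f, 'v) rule \<Rightarrow> bool" where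
  "left_linear_rule lr \<longleftrightarrow> left_linear_term (fst lr)"

definition root_step :: "('f, 'v) rule set \<Rightarrow> ('f, 'v) term \<Rightarrow> ('f, 'v) term \<Rightarrow> bool" where
  "root_step R s u \<longleftrightarrow> (\<exists>(l, r)\<in>R. \<exists>\<mu>. s = l \<cdot> \<mu> \<and> u = r \<cdot> \<mu>)"

definition par_step_with ::
  "('f, 'v) rule set \<Rightarrow> pos set \<Rightarrow> (pos \<Rightarrow> ('f, 'v) rule) \<Rightarrow> ('f, 'v) term \<Rightarrow> ('f, 'v) term \<Rightarrow> bool" where
  "par_step_with R P rl s t \<longleftrightarrow>
     P \<subseteq> poss s \<and> pairwise_parallel P \<and>
     (\<forall>p\<in>P. rl p \<in> R \<and> (\<exists>\<mu>. s |_ p = fst (rl p) \<cdot> \<mu> \<and> t |_ p = snd (rl p) \<cdot> \<mu>)) \<and>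
     t = par_replace s P (\<lambda>p. t |_ p)"

definition par_step :: "('f, 'v) rule set \<Rightarrow> pos set \<Rightarrow> ('f, 'v) term \<Rightarrow> ('f, 'v) term \<Rightarrow> bool" where
  "par_step R P s t \<longleftrightarrow> (\<exists>rl. par_step_with R P rl s t)"

definition par_rstep :: "('f, 'v) rule set \<Rightarrow> ('f, 'v) term \<Rightarrow> ('f, 'v) term \<Rightarrow> bool" where
  "par_rstep R s t \<longleftrightarrow> (\<exists>P. par_step R P s t)"

definition par_subst :: "('f, 'v) rule set \<Rightarrow> ('f, 'v) subst \<Rightarrow> ('f, 'v) subst \<Rightarrow> bool" where
  "par_subst R \<sigma> \<tau> \<longleftrightarrow> (\<forall>x. par_rstep R (\<sigma> x) (\<tau> x))"

definition variant :: "('f, 'v) rule \<Rightarrow> ('f, 'v) rule \<Rightarrow> bool" where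
  "variant lr' lr \<longleftrightarrow> (\<exists>\<pi>. bij \<pi> \<and> fst lr' = fst lr \<cdot> (Var \<circ> \<pi>) \<and> snd lr' = snd lr \<cdot> (Var \<circ> \<pi>))"

definition rule_vars :: "('f, 'v) rule \<Rightarrow> 'v set" where
  "rule_vars lr = vars_term (fst lr) \<union> vars_term (snd lr)"

definition orthogonal_peak :: "('f, 'v) rule \<Rightarrow> pos set \<Rightarrow> (pos \<Rightarrow> ('f, 'v) rule) \<Rightarrow> bool" where
  "orthogonal_peak lr P rl \<longleftrightarrow>
     P \<inter> fun_poss (fst lr) = {} \<or> (P = {[]} \<and> variant (rl []) lr)"

definition unifier :: "(('f, 'v) term \<times> ('f, 'v) term) set \<Rightarrow> ('f, 'v) subst \<Rightarrow> bool" where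
  "unifier E \<sigma> \<longleftrightarrow> (\<forall>(a, b)\<in>E. a \<cdot> \<sigma> = b \<cdot> \<sigma>)"

definition mgu :: "(('f, 'v) term \<times> ('f, 'v) term) set \<Rightarrow> ('f, 'v) subst \<Rightarrow> bool" where
  "mgu E \<sigma> \<longleftrightarrow> unifier E \<sigma> \<and> (\<forall>\<theta>. unifier E \<theta> \<longrightarrow> (\<exists>\<delta>. \<theta> = subst_comp \<sigma> \<delta>))"

definition par_crit_peak ::
  "('f, 'v) rule set \<Rightarrow> ('f, 'v) rule set \<Rightarrow>
   ('f, 'v) term \<Rightarrow> pos set \<Rightarrow> ('f, 'v) term \<Rightarrow> ('f, 'v) term \<Rightarrow> bool" where
  "par_crit_peak R S t0 P0 s0 u0 \<longleftrightarrow>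
     (\<exists>l r rl \<sigma>.
        (\<exists>lr\<in>S. variant (l, r) lr) \<and>
        P0 \<subseteq> fun_poss l \<and> P0 \<noteq> {} \<and> pairwise_parallel P0 \<and>
        (\<forall>p\<in>P0. \<exists>lr\<in>R. variant (rl p) lr) \<and>
        (\<forall>p\<in>P0. rule_vars (rl p) \<inter> rule_vars (l, r) = {}) \<and>
        (\<forall>p\<in>P0. \<forall>q\<in>P0. p \<noteq> q \<longrightarrow> rule_vars (rl p) \<inter> rule_vars (rl q) = {}) \<and>
        mgu ((\<lambda>p. (fst (rl p), l |_ p)) ` P0) \<sigma> \<and>
        (P0 = {[]} \<longrightarrow> \<not> variant (rl []) (l, r)) \<and>
        s0 = l \<cdot> \<sigma> \<and>
        t0 = par_replace (l \<cdot> \<sigma>) P0 (\<lambda>p. snd (rl p) \<cdot> \<sigma>) \<and>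
        u0 = r \<cdot> \<sigma>)"

end

theory Submission
  imports Defs
begin


declare par_replace.simps[simp del]

lemma pr_root[simp]: "[] \<in> P \<Longrightarrow> par_replace s P g = g []"
  by (subst par_replace.simps) simp
lemma pr_Var[simp]: "[] \<notin> P \<Longrightarrow> par_replace (Var x) P g = Var x"
  by (subst par_replace.simps) simp
lemma pr_Fun[simp]: "[] \<notin> P \<Longrightarrow> par_replace (Fun f ss) P g =
   Fun f (map (\<lambda>i. par_replace (ss ! i) {q. i # q \<in> P} (\<lambda>q. g (i # q))) [0..<length ss])"
  by (subst par_replace.simps) simp

lemma subst_Var[simp]: "t \<cdot> Var = t"
  by (induction t) (auto intro: map_idI)

lemma subst_subst: "t \<cdot> \<sigma> \<cdot> \<tau> = t \<cdot> subst_comp \<sigma> \<tau>"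
  by (induction t) (auto simp: subst_comp_def)

lemma subst_comp_assoc: "subst_comp (subst_comp \<sigma> \<tau>) \<delta> = subst_comp \<sigma> (subst_comp \<tau> \<delta>)"
  by (auto simp: subst_comp_def subst_subst)

lemma term_subst_eq: "(\<And>x. x \<in> vars_term t \<Longrightarrow> \<sigma> x = \<tau> x) \<Longrightarrow> t \<cdot> \<sigma> = t \<cdot> \<tau>"
  by (induction t) auto

lemma term_subst_eq_rev: "t \<cdot> \<sigma> = t \<cdot> \<tau> \<Longrightarrow> x \<in> vars_term t \<Longrightarrow> \<sigma> x = \<tau> x"
  by (induction t) (auto simp: map_eq_conv)

lemma vars_subst: "vars_term (t \<cdot> \<sigma>) = (\<Union>x\<in>vars_term t. vars_term (\<sigma> x))"
  by (induction t) auto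

lemma finite_vars[simp]: "finite (vars_term t)"
  by (induction t) auto

lemma poss_Cons[simp]: "i # q \<in> poss (Fun f ss) \<longleftrightarrow> i < length ss \<and> q \<in> poss (ss ! i)"
  by auto
lemma poss_Cons_Var[simp]: "i # q \<notin> poss (Var x)"
  by auto
lemma Nil_poss[simp]: "[] \<in> poss t"
  by (cases t) auto

lemma fun_poss_Cons[simp]: "i # q \<in> fun_poss (Fun f ss) \<longleftrightarrow> i < length ss \<and> q \<in> fun_poss (ss ! i)"
  by auto
lemma Nil_fun_poss[simp]: "[] \<in> fun_poss (Fun f ss)" by simp
lemma Nil_fun_poss_Var[simp]: "p \<notin> fun_poss (Var x)" by simp
declare poss.simps(2)[simp del] fun_poss.simps(2)[simp del]

lemma fun_poss_poss: "p \<in> fun_poss t \<Longrightarrow> p \<in> poss t"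
proof (induction t arbitrary: p)
  case (Fun f ss) then show ?case by (cases p) auto
qed auto

lemma finite_poss: "finite (poss t)"
proof (induction t)
  case (Fun f ss) then show ?case by (auto simp: poss.simps)
qed auto

lemma finite_fun_poss: "finite (fun_poss t)"
  using finite_subset[OF _ finite_poss] fun_poss_poss by blast

lemma subt_at_append: "s |_ (p @ q) = (s |_ p) |_ q"
proof (induction s p rule: subt_at.induct)
  case (3 x i p) then show ?case by (cases q) auto
qed auto

lemma subt_at_Var[simp]: "Var x |_ p = Var x"
  by (cases p) auto

lemma poss_append: "p @ q \<in> poss s \<longleftrightarrow> p \<in> poss s \<and> q \<in> poss (s |_ p)"
proof (induction s p rule: subt_at.induct)
  case (1 s) then show ?case by simp
next
  case (2 f ss i p) then show ?case by auto
next
  case (3 x i p) then show ?case by simp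
qed

lemma poss_subst: "p \<in> poss t \<Longrightarrow> p \<in> poss (t \<cdot> \<sigma>) \<and> (t \<cdot> \<sigma>) |_ p = (t |_ p) \<cdot> \<sigma>"
proof (induction t arbitrary: p)
  case (Var x) then show ?case by auto
next
  case (Fun f ss) then show ?case by (cases p) auto
qed

lemma fun_poss_Fun: "p \<in> fun_poss t \<Longrightarrow> \<exists>f ts. t |_ p = Fun f ts"
proof (induction t arbitrary: p)
  case (Fun f ss) then show ?case by (cases p) auto
qed auto

lemma poss_not_fun: "p \<in> poss t \<Longrightarrow> p \<notin> fun_poss t \<Longrightarrow> \<exists>x. t |_ p = Var x"
proof (induction t arbitrary: p)
  case (Fun f ss) then show ?case by (cases p) auto
qed auto

lemma vars_subt: "p \<in> poss t \<Longrightarrow> vars_term (t |_ p) \<subseteq> vars_term t"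
proof (induction t arbitrary: p)
  case (Fun f ss) then show ?case by (cases p) (auto, meson UN_I nth_mem subsetD)
qed auto

lemma vars_poss: "x \<in> vars_term t \<Longrightarrow> \<exists>q\<in>poss t. t |_ q = Var x"
proof (induction t)
  case (Fun f ss)
  then obtain i where i: "i < length ss" "x \<in> vars_term (ss ! i)" by (auto simp: in_set_conv_nth)
  with Fun obtain q where "q \<in> poss (ss ! i)" "ss ! i |_ q = Var x" by (meson nth_mem)
  with i show ?case by (intro bexI[of _ "i # q"]) auto
qed auto

lemma poss_subst_split: "p \<in> poss (t \<cdot> \<sigma>) \<Longrightarrow> p \<in> fun_poss t \<or> (\<exists>q x p'. p = q @ p' \<and> q \<in> poss t \<and> t |_ q = Var x)"
proof (induction t arbitrary: p)
  case (Var x) then show ?case by (intro disjI2 exI[of _ "[]"]) auto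
next
  case (Fun f ss)
  show ?case
  proof (cases p)
    case (Cons i p1)
    with Fun.prems have i: "i < length ss" "p1 \<in> poss (ss ! i \<cdot> \<sigma>)" by auto
    with Fun.IH[of "ss ! i" p1] have "p1 \<in> fun_poss (ss ! i) \<or> (\<exists>q x p'. p1 = q @ p' \<and> q \<in> poss (ss!i) \<and> ss!i |_ q = Var x)"
      by auto
    then show ?thesis
    proof
      assume "p1 \<in> fun_poss (ss ! i)" then show ?thesis using i Cons by auto
    next
      assume "\<exists>q x p'. p1 = q @ p' \<and> q \<in> poss (ss!i) \<and> ss!i |_ q = Var x"
      then obtain q x p' where "p1 = q @ p'" "q \<in> poss (ss!i)" "ss!i |_ q = Var x" by blast
      then show ?thesis using i Cons by (intro disjI2 exI[of _ "i # q"] exI[of _ x] exI[of _ p']) auto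
    qed
  qed auto
qed



lemma prefix_Nil[simp]: "prefix_pos [] q" by (simp add: prefix_pos_def)
lemma prefix_Cons_Nil[simp]: "\<not> prefix_pos (i # p) []" by (simp add: prefix_pos_def)
lemma prefix_Cons_Cons[simp]: "prefix_pos (i # p) (j # q) \<longleftrightarrow> i = j \<and> prefix_pos p q"
  by (auto simp: prefix_pos_def)
lemma prefix_append[simp]: "prefix_pos p (p @ q)" by (simp add: prefix_pos_def)

lemma pp_Nil: "pairwise_parallel P \<Longrightarrow> [] \<in> P \<Longrightarrow> P = {[]}"
  unfolding pairwise_parallel_def parallel_pos_def using prefix_Nil by blast

lemma pp_sub: "pairwise_parallel P \<Longrightarrow> pairwise_parallel {q. i # q \<in> P}"
  unfolding pairwise_parallel_def parallel_pos_def using prefix_Cons_Cons by blast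

lemma pp_mono: "pairwise_parallel P \<Longrightarrow> Q \<subseteq> P \<Longrightarrow> pairwise_parallel Q"
  by (auto simp: pairwise_parallel_def)

lemma pr_empty[simp]: "par_replace s {} g = s"
proof (induction s arbitrary: g)
  case (Fun f ss)
  have "map (\<lambda>i. par_replace (ss ! i) {} (\<lambda>q. g (i # q))) [0..<length ss] = map (\<lambda>i. ss ! i) [0..<length ss]"
    using Fun by (auto intro!: map_cong)
  then show ?case by (simp add: map_nth)
qed auto

lemma pr_at: "P \<subseteq> poss s \<Longrightarrow> pairwise_parallel P \<Longrightarrow> p \<in> P \<Longrightarrow>
   p \<in> poss (par_replace s P g) \<and> (par_replace s P g) |_ p = g p"
proof (induction s arbitrary: P g p)
  case (Var x)
  then have "P = {[]}" using pp_Nil[of P] by (auto simp: subset_singleton_iff) 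
  then show ?case using Var by auto
next
  case (Fun f ss)
  show ?case
  proof (cases "[] \<in> P")
    case True then show ?thesis using Fun pp_Nil[of P] by auto
  next
    case False
    with Fun.prems obtain i q where p: "p = i # q" by (cases p) auto
    with Fun.prems have i: "i < length ss" "q \<in> {q. i # q \<in> P}" by auto
    have "{q. i # q \<in> P} \<subseteq> poss (ss ! i)" using Fun.prems by auto
    from Fun.IH[OF nth_mem[OF i(1)] this pp_sub[OF Fun.prems(2)] i(2)] show ?thesis
      using False p i by auto
  qed
qed

lemma pr_par: "p \<in> poss s \<Longrightarrow> (\<forall>q\<in>P. \<not> prefix_pos q p \<and> \<not> prefix_pos p q) \<Longrightarrow>
   p \<in> poss (par_replace s P g) \<and> (par_replace s P g) |_ p = s |_ p"
proof (induction s arbitrary: P g p)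
  case (Var x)
  then have "p = []" by (cases p) auto
  then show ?case using Var by (cases "P = {}") auto
next
  case (Fun f ss)
  have "[] \<notin> P" using Fun.prems by auto
  show ?case
  proof (cases p)
    case Nil then show ?thesis using Fun.prems by (cases "P = {}") auto
  next
    case (Cons i q)
    with Fun.prems have i: "i < length ss" "q \<in> poss (ss ! i)" by auto
    have "\<forall>q'\<in>{q. i # q \<in> P}. \<not> prefix_pos q' q \<and> \<not> prefix_pos q q'"
      using Fun.prems(2) Cons by auto
    from Fun.IH[OF nth_mem[OF i(1)] i(2) this] show ?thesis
      using \<open>[] \<notin> P\<close> Cons i by auto
  qed
qed

lemma pr_cong: "(\<And>p. p \<in> P \<Longrightarrow> g p = g' p) \<Longrightarrow> par_replace s P g = par_replace s P g'"
proof (induction s arbitrary: P g g')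
  case (Var x) then show ?case by (cases "[] \<in> P") auto
next
  case (Fun f ss)
  show ?case
  proof (cases "[] \<in> P")
    case True then show ?thesis using Fun.prems by simp
  next
    case False
    have "par_replace (ss ! i) {q. i # q \<in> P} (\<lambda>q. g (i # q)) = par_replace (ss ! i) {q. i # q \<in> P} (\<lambda>q. g' (i # q))"
      if "i < length ss" for i
      by (rule Fun.IH[OF nth_mem[OF that]]) (use Fun.prems in simp)
    then show ?thesis using False by simp
  qed
qed

lemma pr_subst: "P \<subseteq> poss s \<Longrightarrow> (par_replace s P g) \<cdot> \<sigma> = par_replace (s \<cdot> \<sigma>) P (\<lambda>p. g p \<cdot> \<sigma>)"
proof (induction s arbitrary: P g)
  case (Var x)
  then have "P = {} \<or> P = {[]}" by (auto simp: subset_singleton_iff)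
  then show ?case by auto
next
  case (Fun f ss)
  show ?case
  proof (cases "[] \<in> P")
    case False
    have "\<And>i. i < length ss \<Longrightarrow> {q. i # q \<in> P} \<subseteq> poss (ss ! i)" using Fun.prems by auto
    then show ?thesis using False Fun.IH by auto
  qed auto
qed

lemma pr_split: "P \<subseteq> poss s \<Longrightarrow> pairwise_parallel P \<Longrightarrow> Q \<subseteq> P \<Longrightarrow>
  par_replace (par_replace s Q g) (P - Q) g = par_replace s P g"
proof (induction s arbitrary: P Q g)
  case (Var x)
  then have "P = {} \<or> P = {[]}" by (auto simp: subset_singleton_iff)
  then show ?case using Var by (cases "Q = {}") (auto simp: subset_singleton_iff)
next
  case (Fun f ss)
  show ?case
  proof (cases "[] \<in> P")
    case True
    then have "P = {[]}" using pp_Nil Fun.prems by blast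
    then show ?thesis using Fun.prems by (cases "Q = {}") (auto simp: subset_singleton_iff)
  next
    case False
    then have "[] \<notin> Q" "[] \<notin> P - Q" using Fun.prems by auto
    have *: "par_replace (par_replace (ss ! i) {q. i # q \<in> Q} (\<lambda>q. g (i # q))) {q. i # q \<in> P - Q} (\<lambda>q. g (i # q))
       = par_replace (ss ! i) {q. i # q \<in> P} (\<lambda>q. g (i # q))" if i: "i < length ss" for i
    proof -
      have e: "{q. i # q \<in> P - Q} = {q. i # q \<in> P} - {q. i # q \<in> Q}" by auto
      show ?thesis unfolding e
        by (rule Fun.IH[OF nth_mem[OF i]]) (use Fun.prems pp_sub i in auto)
    qed
    show ?thesis using False \<open>[] \<notin> Q\<close> \<open>[] \<notin> P - Q\<close> * by auto
  qed
qed

lemma par_step_part: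
  assumes "par_step_with R P rl s t" "P0 \<subseteq> P"
  shows "par_step_with R (P - P0) rl (par_replace s P0 (\<lambda>p. t |_ p)) t"
proof -
  from assms(1) have P: "P \<subseteq> poss s" "pairwise_parallel P"
    and rules: "\<forall>p\<in>P. rl p \<in> R \<and> (\<exists>\<mu>. s |_ p = fst (rl p) \<cdot> \<mu> \<and> t |_ p = snd (rl p) \<cdot> \<mu>)"
    and t: "t = par_replace s P (\<lambda>p. t |_ p)"
    by (auto simp: par_step_with_def)
  have par: "\<forall>q\<in>P0. \<not> prefix_pos q p \<and> \<not> prefix_pos p q" if "p \<in> P - P0" for p
    using that assms(2) P(2) by (auto simp: pairwise_parallel_def parallel_pos_def)
  have a: "p \<in> poss (par_replace s P0 (\<lambda>p. t |_ p)) \<and> par_replace s P0 (\<lambda>p. t |_ p) |_ p = s |_ p"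
    if "p \<in> P - P0" for p
    using pr_par[OF _ par[OF that]] that P by auto
  show ?thesis unfolding par_step_with_def
  proof (intro conjI)
    show "P - P0 \<subseteq> poss (par_replace s P0 (\<lambda>p. t |_ p))" using a by auto
    show "pairwise_parallel (P - P0)" using P pp_mono by blast
    show "\<forall>p\<in>P - P0. rl p \<in> R \<and> (\<exists>\<mu>. par_replace s P0 (\<lambda>p. t |_ p) |_ p = fst (rl p) \<cdot> \<mu> \<and> t |_ p = snd (rl p) \<cdot> \<mu>)"
      using a rules by auto
    show "t = par_replace (par_replace s P0 (\<lambda>p. t |_ p)) (P - P0) (\<lambda>p. t |_ p)"
      using pr_split[OF P assms(2)] t by simp
  qed
qed



lemma prefix_append_append[simp]: "prefix_pos (q @ a) (q @ b) \<longleftrightarrow> prefix_pos a b"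
  by (auto simp: prefix_pos_def)

lemma pp_append: "pairwise_parallel P \<Longrightarrow> pairwise_parallel {p'. q @ p' \<in> P}"
  unfolding pairwise_parallel_def parallel_pos_def using prefix_append_append by blast

lemma sub_step:
  assumes P: "P \<subseteq> poss (l \<cdot> \<mu>)" "pairwise_parallel P"
    and rules: "\<forall>p\<in>P. rl p \<in> R \<and> (\<exists>\<mu>'. (l \<cdot> \<mu>) |_ p = fst (rl p) \<cdot> \<mu>' \<and> g p = snd (rl p) \<cdot> \<mu>')"
    and q: "q \<in> poss l" "l |_ q = Var x"
  shows "par_step_with R {p'. q @ p' \<in> P} (\<lambda>p'. rl (q @ p')) (\<mu> x)
           (par_replace (\<mu> x) {p'. q @ p' \<in> P} (\<lambda>p'. g (q @ p')))"
    and "(\<forall>p\<in>P. vars_term (snd (rl p)) \<subseteq> vars_term (fst (rl p))) \<Longrightarrow>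
         vars_at (par_replace (\<mu> x) {p'. q @ p' \<in> P} (\<lambda>p'. g (q @ p'))) {p'. q @ p' \<in> P} \<subseteq> vars_at (l \<cdot> \<mu>) P"
proof -
  let ?Q = "{p'. q @ p' \<in> P}"
  let ?t = "par_replace (\<mu> x) ?Q (\<lambda>p'. g (q @ p'))"
  have lq: "(l \<cdot> \<mu>) |_ q = \<mu> x" "q \<in> poss (l \<cdot> \<mu>)" using poss_subst[OF q(1), of \<mu>] q(2) by auto
  have sub: "(l \<cdot> \<mu>) |_ (q @ p') = \<mu> x |_ p'" for p' using lq by (simp add: subt_at_append)
  have Qp: "?Q \<subseteq> poss (\<mu> x)" using P(1) lq by (auto simp: poss_append)
  have Qpp: "pairwise_parallel ?Q" using pp_append[OF P(2)] .
  have at: "p' \<in> poss ?t \<and> ?t |_ p' = g (q @ p')" if "p' \<in> ?Q" for p'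
    using pr_at[OF Qp Qpp that] .
  show "par_step_with R ?Q (\<lambda>p'. rl (q @ p')) (\<mu> x) ?t"
    unfolding par_step_with_def
  proof (intro conjI)
    show "\<forall>p\<in>?Q. rl (q @ p) \<in> R \<and> (\<exists>\<mu>'. \<mu> x |_ p = fst (rl (q @ p)) \<cdot> \<mu>' \<and> ?t |_ p = snd (rl (q @ p)) \<cdot> \<mu>')"
      using rules at sub by fastforce
    show "?t = par_replace (\<mu> x) ?Q (\<lambda>p. ?t |_ p)"
      by (rule pr_cong) (use at in simp)
  qed (use Qp Qpp in auto)
  assume wf: "\<forall>p\<in>P. vars_term (snd (rl p)) \<subseteq> vars_term (fst (rl p))"
  show "vars_at ?t ?Q \<subseteq> vars_at (l \<cdot> \<mu>) P"
  proof
    fix y assume "y \<in> vars_at ?t ?Q"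
    then obtain p' where p': "p' \<in> ?Q" "y \<in> vars_term (?t |_ p')" by (auto simp: vars_at_def)
    then have "y \<in> vars_term (g (q @ p'))" using at by auto
    moreover from rules p' obtain \<mu>' where "(l \<cdot> \<mu>) |_ (q @ p') = fst (rl (q @ p')) \<cdot> \<mu>'"
      "g (q @ p') = snd (rl (q @ p')) \<cdot> \<mu>'" by auto
    ultimately have "y \<in> vars_term ((l \<cdot> \<mu>) |_ (q @ p'))"
      using wf p' by (auto simp: vars_subst)
    then show "y \<in> vars_at (l \<cdot> \<mu>) P" using p' by (auto simp: vars_at_def)
  qed
qed

lemma par_step_Fun:
  assumes len: "length ts = length ss"
    and st: "\<forall>i<length ss. par_step_with R (PP i) (RL i) (ss ! i) (ts ! i)"
  shows "par_step_with R (\<Union>i<length ss. (#) i ` PP i) (\<lambda>p. RL (hd p) (tl p)) (Fun f ss) (Fun f ts)"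
    and "vars_at (Fun f ts) (\<Union>i<length ss. (#) i ` PP i) = (\<Union>i<length ss. vars_at (ts ! i) (PP i))"
proof -
  let ?P = "\<Union>i<length ss. (#) i ` PP i"
  from st have P: "\<And>i. i < length ss \<Longrightarrow> PP i \<subseteq> poss (ss ! i) \<and> pairwise_parallel (PP i) \<and>
     (\<forall>p\<in>PP i. RL i p \<in> R \<and> (\<exists>\<mu>. ss ! i |_ p = fst (RL i p) \<cdot> \<mu> \<and> ts ! i |_ p = snd (RL i p) \<cdot> \<mu>)) \<and>
     ts ! i = par_replace (ss ! i) (PP i) (\<lambda>p. ts ! i |_ p)"
    by (auto simp: par_step_with_def)
  have sub: "{q. i # q \<in> ?P} = PP i" if "i < length ss" for i using that by auto
  have Pp: "PP i \<subseteq> poss (ss ! i)" if "i < length ss" for i using P[OF that] by blast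
  show "par_step_with R ?P (\<lambda>p. RL (hd p) (tl p)) (Fun f ss) (Fun f ts)"
    unfolding par_step_with_def
  proof (intro conjI)
    show "?P \<subseteq> poss (Fun f ss)"
    proof
      fix p assume "p \<in> ?P"
      then obtain i p' where "i < length ss" "p' \<in> PP i" "p = i # p'" by auto
      then show "p \<in> poss (Fun f ss)" using Pp[of i] by auto
    qed
    show "pairwise_parallel ?P"
      unfolding pairwise_parallel_def
    proof (intro ballI impI)
      fix p q assume "p \<in> ?P" "q \<in> ?P" "p \<noteq> q"
      then obtain i j p' q' where "p = i # p'" "q = j # q'" "p' \<in> PP i" "q' \<in> PP j" "i < length ss" by auto
      then show "parallel_pos p q" using P \<open>p \<noteq> q\<close>
        by (cases "i = j") (auto simp: parallel_pos_def pairwise_parallel_def)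
    qed
    show "\<forall>p\<in>?P. RL (hd p) (tl p) \<in> R \<and> (\<exists>\<mu>. Fun f ss |_ p = fst (RL (hd p) (tl p)) \<cdot> \<mu> \<and> Fun f ts |_ p = snd (RL (hd p) (tl p)) \<cdot> \<mu>)"
      using P by auto
    have "[] \<notin> ?P" by auto
    have "map (\<lambda>i. par_replace (ss ! i) {q. i # q \<in> ?P} (\<lambda>q. Fun f ts |_ (i # q))) [0..<length ss]
       = map (\<lambda>i. ts ! i) [0..<length ts]"
      using P sub len by (auto intro!: map_cong)
    then show "Fun f ts = par_replace (Fun f ss) ?P (\<lambda>p. Fun f ts |_ p)"
      using \<open>[] \<notin> ?P\<close> by (simp add: map_nth)
  qed
  show "vars_at (Fun f ts) ?P = (\<Union>i<length ss. vars_at (ts ! i) (PP i))"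
    by (auto simp: vars_at_def)
qed

lemma par_step_subst:
  assumes "\<forall>x\<in>vars_term r. \<exists>Q rl'. par_step_with R Q rl' (\<mu> x) (\<rho> x) \<and> vars_at (\<rho> x) Q \<subseteq> V"
  shows "\<exists>P' rl'. par_step_with R P' rl' (r \<cdot> \<mu>) (r \<cdot> \<rho>) \<and> vars_at (r \<cdot> \<rho>) P' \<subseteq> V"
  using assms
proof (induction r)
  case (Var x) then show ?case by auto
next
  case (Fun f rs)
  have "\<forall>i. \<exists>QR. i < length rs \<longrightarrow> par_step_with R (fst QR) (snd QR) (rs ! i \<cdot> \<mu>) (rs ! i \<cdot> \<rho>) \<and>
       vars_at (rs ! i \<cdot> \<rho>) (fst QR) \<subseteq> V"
  proof
    fix i
    show "\<exists>QR. i < length rs \<longrightarrow> par_step_with R (fst QR) (snd QR) (rs ! i \<cdot> \<mu>) (rs ! i \<cdot> \<rho>) \<and>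
       vars_at (rs ! i \<cdot> \<rho>) (fst QR) \<subseteq> V"
    proof (cases "i < length rs")
      case True
      have "\<forall>x\<in>vars_term (rs ! i). \<exists>Q rl'. par_step_with R Q rl' (\<mu> x) (\<rho> x) \<and> vars_at (\<rho> x) Q \<subseteq> V"
        using Fun.prems True by auto
      from Fun.IH[OF nth_mem[OF True] this] obtain P' rl' where
        "par_step_with R P' rl' (rs ! i \<cdot> \<mu>) (rs ! i \<cdot> \<rho>) \<and> vars_at (rs ! i \<cdot> \<rho>) P' \<subseteq> V" by blast
      then show ?thesis by (intro exI[of _ "(P', rl')"]) auto
    qed auto
  qed
  from choice[OF this] obtain QR where QR: "\<And>i. i < length rs \<Longrightarrow>
     par_step_with R (fst (QR i)) (snd (QR i)) (rs ! i \<cdot> \<mu>) (rs ! i \<cdot> \<rho>) \<and> vars_at (rs ! i \<cdot> \<rho>) (fst (QR i)) \<subseteq> V"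
    by blast
  let ?ss = "map (\<lambda>t. t \<cdot> \<mu>) rs" and ?ts = "map (\<lambda>t. t \<cdot> \<rho>) rs"
  have "\<forall>i<length ?ss. par_step_with R (fst (QR i)) (snd (QR i)) (?ss ! i) (?ts ! i)" using QR by auto
  note F = par_step_Fun[of ?ts ?ss, OF _ this]
  show ?case
    apply (rule exI, rule exI, rule conjI)
     apply (simp only: subst_apply.simps, rule F(1), simp)
    apply (simp only: subst_apply.simps)
    unfolding vars_at_def
  proof
    fix y assume "y \<in> (\<Union>p\<in>\<Union>i<length ?ss. (#) i ` fst (QR i). vars_term (Fun f ?ts |_ p))"
    then obtain i p' where "i < length rs" "p' \<in> fst (QR i)" "y \<in> vars_term ((rs ! i \<cdot> \<rho>) |_ p')" by auto
    then show "y \<in> V" using QR[of i] by (auto simp: vars_at_def)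
  qed
qed

lemma ll_sub: "left_linear_term (Fun f ls) \<Longrightarrow> i < length ls \<Longrightarrow> left_linear_term (ls ! i)"
  unfolding left_linear_term_def
proof (intro ballI allI impI)
  fix p q x
  assume ll: "\<forall>p\<in>poss (Fun f ls). \<forall>q\<in>poss (Fun f ls). \<forall>x. Fun f ls |_ p = Var x \<and> Fun f ls |_ q = Var x \<longrightarrow> p = q"
    and i: "i < length ls" and pq: "p \<in> poss (ls ! i)" "q \<in> poss (ls ! i)" "ls ! i |_ p = Var x \<and> ls ! i |_ q = Var x"
  from ll[rule_format, of "i # p" "i # q" x] i pq show "p = q" by auto
qed

lemma ll_disj: "left_linear_term (Fun f ls) \<Longrightarrow> i < length ls \<Longrightarrow> j < length ls \<Longrightarrow>
  y \<in> vars_term (ls ! i) \<Longrightarrow> y \<in> vars_term (ls ! j) \<Longrightarrow> i = j"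
proof -
  assume ll: "left_linear_term (Fun f ls)" and ij: "i < length ls" "j < length ls"
    and y: "y \<in> vars_term (ls ! i)" "y \<in> vars_term (ls ! j)"
  from vars_poss[OF y(1)] obtain q1 where "q1 \<in> poss (ls ! i)" "ls ! i |_ q1 = Var y" by blast
  moreover from vars_poss[OF y(2)] obtain q2 where "q2 \<in> poss (ls ! j)" "ls ! j |_ q2 = Var y" by blast
  ultimately have "i # q1 = j # q2" using ll[unfolded left_linear_term_def, rule_format, of "i # q1" "j # q2" y] ij
    by simp
  then show "i = j" by simp
qed

lemma core:
  assumes "left_linear_term l" "Q \<subseteq> poss (l \<cdot> \<mu>)" "pairwise_parallel Q" "Q \<inter> fun_poss l = {}"
  shows "\<exists>\<rho>. par_replace (l \<cdot> \<mu>) Q g = l \<cdot> \<rho> \<and> (\<forall>x\<in>vars_term l. \<exists>q. q \<in> poss l \<and> l |_ q = Var x \<and>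
            \<rho> x = par_replace (\<mu> x) {p'. q @ p' \<in> Q} (\<lambda>p'. g (q @ p')))"
  using assms
proof (induction l arbitrary: Q g)
  case (Var x)
  show ?case by (intro exI[of _ "\<lambda>y. par_replace (\<mu> y) Q g"]) auto
next
  case (Fun f ls)
  have nQ: "[] \<notin> Q" using Fun.prems(4) by auto
  have "\<forall>i. \<exists>\<rho>. i < length ls \<longrightarrow> par_replace (ls ! i \<cdot> \<mu>) {q. i # q \<in> Q} (\<lambda>q. g (i # q)) = ls ! i \<cdot> \<rho> \<and>
     (\<forall>x\<in>vars_term (ls ! i). \<exists>q. q \<in> poss (ls ! i) \<and> ls ! i |_ q = Var x \<and>
            \<rho> x = par_replace (\<mu> x) {p'. q @ p' \<in> {q. i # q \<in> Q}} (\<lambda>p'. g (i # (q @ p'))))"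
  proof
    fix i
    show "\<exists>\<rho>. i < length ls \<longrightarrow> par_replace (ls ! i \<cdot> \<mu>) {q. i # q \<in> Q} (\<lambda>q. g (i # q)) = ls ! i \<cdot> \<rho> \<and>
     (\<forall>x\<in>vars_term (ls ! i). \<exists>q. q \<in> poss (ls ! i) \<and> ls ! i |_ q = Var x \<and>
            \<rho> x = par_replace (\<mu> x) {p'. q @ p' \<in> {q. i # q \<in> Q}} (\<lambda>p'. g (i # (q @ p'))))"
    proof (cases "i < length ls")
      case True
      have a: "left_linear_term (ls ! i)" using ll_sub Fun.prems(1) True .
      have b: "{q. i # q \<in> Q} \<subseteq> poss (ls ! i \<cdot> \<mu>)" using Fun.prems(2) True by auto
      have c: "pairwise_parallel {q. i # q \<in> Q}" using pp_sub Fun.prems(3) .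
      have d: "{q. i # q \<in> Q} \<inter> fun_poss (ls ! i) = {}" using Fun.prems(4) True by auto
      from Fun.IH[OF nth_mem[OF True] a b c d, of "\<lambda>q. g (i # q)"] show ?thesis by auto
    qed auto
  qed
  from choice[OF this] obtain RH where RH: "\<And>i. i < length ls \<Longrightarrow>
     par_replace (ls ! i \<cdot> \<mu>) {q. i # q \<in> Q} (\<lambda>q. g (i # q)) = ls ! i \<cdot> RH i \<and>
     (\<forall>x\<in>vars_term (ls ! i). \<exists>q. q \<in> poss (ls ! i) \<and> ls ! i |_ q = Var x \<and>
            RH i x = par_replace (\<mu> x) {p'. q @ p' \<in> {q. i # q \<in> Q}} (\<lambda>p'. g (i # (q @ p'))))"
    by blast
  define \<rho> where "\<rho> y = RH (SOME i. i < length ls \<and> y \<in> vars_term (ls ! i)) y" for y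
  have rho: "\<rho> y = RH i y" if "i < length ls" "y \<in> vars_term (ls ! i)" for i y
  proof -
    have "\<exists>i. i < length ls \<and> y \<in> vars_term (ls ! i)" using that by blast
    then have "(SOME i. i < length ls \<and> y \<in> vars_term (ls ! i)) < length ls \<and>
               y \<in> vars_term (ls ! (SOME i. i < length ls \<and> y \<in> vars_term (ls ! i)))"
      by (rule someI_ex)
    then have "(SOME i. i < length ls \<and> y \<in> vars_term (ls ! i)) = i"
      using ll_disj[OF Fun.prems(1)] that by blast
    then show ?thesis by (simp add: \<rho>_def)
  qed
  have eq: "ls ! i \<cdot> RH i = ls ! i \<cdot> \<rho>" if "i < length ls" for i
    by (rule term_subst_eq) (use rho that in auto)
  have "par_replace (Fun f ls \<cdot> \<mu>) Q g = Fun f (map (\<lambda>i. ls ! i \<cdot> \<rho>) [0..<length ls])"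
    using nQ RH eq by (auto intro!: map_cong)
  also have "\<dots> = Fun f ls \<cdot> \<rho>"
  proof -
    have "map (\<lambda>i. ls ! i \<cdot> \<rho>) [0..<length ls] = map (\<lambda>t. t \<cdot> \<rho>) ls" by (rule nth_equalityI) auto
    then show ?thesis by simp
  qed
  finally have 1: "par_replace (Fun f ls \<cdot> \<mu>) Q g = Fun f ls \<cdot> \<rho>" .
  have 2: "\<exists>q. q \<in> poss (Fun f ls) \<and> Fun f ls |_ q = Var x \<and>
            \<rho> x = par_replace (\<mu> x) {p'. q @ p' \<in> Q} (\<lambda>p'. g (q @ p'))" if "x \<in> vars_term (Fun f ls)" for x
  proof -
    from that obtain i where i: "i < length ls" "x \<in> vars_term (ls ! i)" by (auto simp: in_set_conv_nth)
    from RH[OF i(1)] i(2) obtain q where "q \<in> poss (ls ! i)" "ls ! i |_ q = Var x"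
      "RH i x = par_replace (\<mu> x) {p'. q @ p' \<in> {q. i # q \<in> Q}} (\<lambda>p'. g (i # (q @ p')))" by blast
    then show ?thesis using i rho[OF i] by (intro exI[of _ "i # q"]) auto
  qed
  show ?case using 1 2 by blast
qed



definition varsE :: "(('f, 'v) term \<times> ('f, 'v) term) set \<Rightarrow> 'v set" where
  "varsE E = (\<Union>(a, b)\<in>E. vars_term a \<union> vars_term b)"

definition good :: "(('f, 'v) term \<times> ('f, 'v) term) set \<Rightarrow> ('f, 'v) subst \<Rightarrow> bool" where
  "good E \<sigma> \<longleftrightarrow> mgu E \<sigma> \<and> (\<forall>z. z \<notin> varsE E \<longrightarrow> \<sigma> z = Var z) \<and> (\<forall>z\<in>varsE E. vars_term (\<sigma> z) \<subseteq> varsE E)"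

lemma finite_varsE: "finite (varsE (set E))"
  by (auto simp: varsE_def)

lemma size_arg: "u \<in> set us \<Longrightarrow> size u < size (Fun f us)"
  by (simp add: size_list_estimation' le_imp_less_Suc)

lemma occurs: "x \<in> vars_term t \<Longrightarrow> t \<noteq> Var x \<Longrightarrow> size (\<theta> x) < size (t \<cdot> \<theta>)"
proof (induction t)
  case (Fun f ts)
  then obtain u where u: "u \<in> set ts" "x \<in> vars_term u" by auto
  have "size (u \<cdot> \<theta>) < size (Fun f ts \<cdot> \<theta>)" using size_arg[of "u \<cdot> \<theta>" "map (\<lambda>t. t \<cdot> \<theta>) ts" f] u by auto
  moreover have "size (\<theta> x) \<le> size (u \<cdot> \<theta>)"
    using Fun.IH[OF u] u by (cases "u = Var x") auto
  ultimately show ?case by simp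
qed auto

lemma unifier_cong: "(\<And>\<theta>. unifier E \<theta> \<longleftrightarrow> unifier E' \<theta>) \<Longrightarrow> mgu E \<sigma> \<longleftrightarrow> mgu E' \<sigma>"
  by (simp add: mgu_def)

lemma elim:
  fixes E E' :: "(('f, 'v) term \<times> ('f, 'v) term) list"
  assumes U: "\<And>\<theta>. unifier (set E) \<theta> \<longleftrightarrow> \<theta> x = t \<cdot> \<theta> \<and> unifier (set E') \<theta>"
    and V: "varsE (set E) = insert x (vars_term t \<union> varsE (set E'))"
    and nt: "t \<noteq> Var x"
    and th: "unifier (set E) \<theta>"
    and IH: "\<And>E'' :: (('f, 'v) term \<times> ('f, 'v) term) list. card (varsE (set E'')) < card (varsE (set E)) \<Longrightarrow> (\<forall>\<theta>. unifier (set E'') \<theta> \<longrightarrow> (\<exists>\<sigma>. good (set E'') \<sigma>))"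
  shows "\<exists>\<sigma>. good (set E) \<sigma>"
proof -
  have x: "x \<notin> vars_term t"
  proof
    assume "x \<in> vars_term t"
    from occurs[OF this nt, of \<theta>] U th show False by auto
  qed
  define \<eta> where "\<eta> = Var(x := t)"
  have tet: "t \<cdot> \<eta> = t" by (rule trans[OF term_subst_eq subst_Var]) (use x in \<open>auto simp: \<eta>_def\<close>)
  have comp: "subst_comp \<eta> \<theta>' = \<theta>'" if "\<theta>' x = t \<cdot> \<theta>'" for \<theta>'
    using that by (auto simp: subst_comp_def \<eta>_def)
  define E'' where "E'' = map (\<lambda>(a, b). (a \<cdot> \<eta>, b \<cdot> \<eta>)) E'"
  have UE'': "unifier (set E'') \<theta>' \<longleftrightarrow> unifier (set E') (subst_comp \<eta> \<theta>')" for \<theta>'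
    by (auto simp: E''_def unifier_def subst_subst)
  have vars_eta: "vars_term (a \<cdot> \<eta>) \<subseteq> (vars_term a - {x}) \<union> vars_term t" for a
    by (auto simp: vars_subst \<eta>_def split: if_splits)
  have VE'': "varsE (set E'') \<subseteq> varsE (set E) - {x}"
    using vars_eta x V by (fastforce simp: E''_def varsE_def)
  have c: "card (varsE (set E'')) < card (varsE (set E))"
    by (rule psubset_card_mono[OF finite_varsE]) (use VE'' V in auto)
  have u: "unifier (set E'') \<theta>" using U th comp UE'' by auto
  from IH[OF c, rule_format, OF u] obtain \<sigma>' where g: "good (set E'') \<sigma>'" by blast
  define \<sigma> where "\<sigma> = subst_comp \<eta> \<sigma>'"
  have "good (set E) \<sigma>"
    unfolding good_def mgu_def
  proof (intro conjI allI impI ballI)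
    have "unifier (set E'') \<sigma>'" using g by (auto simp: good_def mgu_def)
    then have "unifier (set E') \<sigma>" using UE'' by (simp add: \<sigma>_def)
    moreover have "\<sigma> x = t \<cdot> \<sigma>"
    proof -
      have "t \<cdot> \<sigma> = t \<cdot> \<eta> \<cdot> \<sigma>'" by (simp add: \<sigma>_def subst_subst)
      also have "\<dots> = t \<cdot> \<sigma>'" using tet by simp
      also have "\<dots> = \<sigma> x" by (simp add: \<sigma>_def subst_comp_def \<eta>_def)
      finally show ?thesis by simp
    qed
    ultimately show "unifier (set E) \<sigma>" using U by auto
  next
    fix \<theta>' assume "unifier (set E) \<theta>'"
    then have h: "\<theta>' x = t \<cdot> \<theta>'" "unifier (set E') \<theta>'" using U by auto
    then have "unifier (set E'') \<theta>'" using UE'' comp by auto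
    then obtain \<delta> where "\<theta>' = subst_comp \<sigma>' \<delta>" using g by (auto simp: good_def mgu_def)
    then have "\<theta>' = subst_comp \<sigma> \<delta>" using comp[OF h(1)] by (metis \<sigma>_def subst_comp_assoc)
    then show "\<exists>\<delta>. \<theta>' = subst_comp \<sigma> \<delta>" by blast
  next
    fix z assume "z \<notin> varsE (set E)"
    then have "z \<noteq> x" "z \<notin> varsE (set E'')" using V VE'' by auto
    then show "\<sigma> z = Var z" using g by (auto simp: \<sigma>_def subst_comp_def \<eta>_def good_def)
  next
    fix z assume z: "z \<in> varsE (set E)"
    have ez: "vars_term (\<eta> z) \<subseteq> varsE (set E)" using z V by (auto simp: \<eta>_def)
    have "vars_term (\<sigma>' y) \<subseteq> varsE (set E)" if "y \<in> varsE (set E)" for y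
    proof (cases "y \<in> varsE (set E'')")
      case True then show ?thesis using g VE'' by (auto simp: good_def)
    next
      case False then show ?thesis using g that by (auto simp: good_def)
    qed
    then show "vars_term (\<sigma> z) \<subseteq> varsE (set E)"
      using ez by (auto simp: \<sigma>_def subst_comp_def vars_subst)
  qed
  then show ?thesis by blast
qed

lemma map_eq_zip: "length ss = length ts \<Longrightarrow> (map h ss = map h ts) \<longleftrightarrow> (\<forall>(a, b)\<in>set (zip ss ts). h a = h b)"
  by (induction ss ts rule: list_induct2) auto

lemma varsE_zip: "length ss = length ts \<Longrightarrow>
  varsE (set (zip ss ts)) = (\<Union>a\<in>set ss. vars_term a) \<union> (\<Union>b\<in>set ts. vars_term b)"
  by (induction ss ts rule: list_induct2) (auto simp: varsE_def)

lemma sz_zip: "length ss = length ts \<Longrightarrow>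
  sum_list (map (\<lambda>(a, b). size a + size b + 1) (zip ss ts)) = sum_list (map size ss) + sum_list (map size ts) + length ss"
  by (induction ss ts rule: list_induct2) auto

lemma sum_size_less: "sum_list (map size ss) + length ss < size (Fun f ss)"
  by (simp add: size_list_conv_sum_list)

lemma good_cong: "(\<And>\<theta>. unifier E \<theta> \<longleftrightarrow> unifier E' \<theta>) \<Longrightarrow> varsE E = varsE E' \<Longrightarrow> good E \<sigma> \<longleftrightarrow> good E' \<sigma>"
  by (simp add: good_def mgu_def)

lemma mgu_list:
  fixes E :: "(('f, 'v) term \<times> ('f, 'v) term) list"
  shows "\<forall>\<theta>. unifier (set E) \<theta> \<longrightarrow> (\<exists>\<sigma>. good (set E) \<sigma>)"
proof (induction E rule: wf_induct[OF wf_inv_image[OF wf_lex_prod[OF wf_less_than wf_less_than]],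
      of "\<lambda>E. (card (varsE (set E)), sum_list (map (\<lambda>(a, b). size a + size b + 1) E))"])
  case (1 E)
  let ?sz = "\<lambda>E. sum_list (map (\<lambda>(a, b). size a + size b + 1) E)"
  have IH1: "\<And>E'' :: (('f, 'v) term \<times> ('f, 'v) term) list. card (varsE (set E'')) < card (varsE (set E)) \<Longrightarrow> (\<forall>\<theta>. unifier (set E'') \<theta> \<longrightarrow> (\<exists>\<sigma>. good (set E'') \<sigma>))"
    by (rule 1[THEN spec, THEN mp]) simp
  have IH2: "\<And>E'' :: (('f, 'v) term \<times> ('f, 'v) term) list. card (varsE (set E'')) \<le> card (varsE (set E)) \<Longrightarrow> ?sz E'' < ?sz E \<Longrightarrow> (\<forall>\<theta>. unifier (set E'') \<theta> \<longrightarrow> (\<exists>\<sigma>. good (set E'') \<sigma>))"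
    by (rule 1[THEN spec, THEN mp]) (auto simp: le_less)
  show ?case
  proof (intro allI impI)
    fix \<theta> assume th: "unifier (set E) \<theta>"
    show "\<exists>\<sigma>. good (set E) \<sigma>"
    proof (cases E)
      case Nil
      have "good (set E) Var" using Nil by (auto simp: good_def mgu_def unifier_def subst_comp_def varsE_def)
      then show ?thesis by blast
    next
      case (Cons ab E')
      obtain a b where ab: "ab = (a, b)" by (cases ab)
      have UE: "unifier (set E) \<theta>' \<longleftrightarrow> a \<cdot> \<theta>' = b \<cdot> \<theta>' \<and> unifier (set E') \<theta>'" for \<theta>'
        by (auto simp: Cons ab unifier_def)
      have VE: "varsE (set E) = vars_term a \<union> vars_term b \<union> varsE (set E')"
        by (auto simp: Cons ab varsE_def)
      show ?thesis
      proof (cases "\<exists>x. a = Var x")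
        case True
        then obtain x where a: "a = Var x" by blast
        show ?thesis
        proof (cases "b = Var x")
          case True
          have "card (varsE (set E')) \<le> card (varsE (set E))"
            by (rule card_mono[OF finite_varsE]) (use VE in auto)
          moreover have "?sz E' < ?sz E" using Cons ab by simp
          moreover have "unifier (set E') \<theta>" using th UE by auto
          ultimately obtain \<sigma> where g: "good (set E') \<sigma>" using IH2 by blast
          have "good (set E) \<sigma>"
            using g UE VE a True unfolding good_def mgu_def by auto
          then show ?thesis by blast
        next
          case False
          show ?thesis
            by (rule elim[OF _ _ False th IH1, of E']) (use UE VE a in auto)
        qed
      next
        case False
        note na = False
        show ?thesis
        proof (cases "\<exists>x. b = Var x")
          case True
          then obtain x where b: "b = Var x" by blast
          show ?thesis
            by (rule elim[OF _ _ _ th IH1, of x a E']) (use UE VE b na in auto)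
        next
          case False
          then obtain f ss g ts where a: "a = Fun f ss" and b: "b = Fun g ts" using na
            by (cases a; cases b) auto
          from th UE a b have fg: "f = g" and len: "length ss = length ts"
            by (auto dest: map_eq_imp_length_eq)
          define E'' where "E'' = zip ss ts @ E'"
          have U'': "unifier (set E) \<theta>' \<longleftrightarrow> unifier (set E'') \<theta>'" for \<theta>'
            unfolding UE E''_def using map_eq_zip[OF len, of "\<lambda>t. t \<cdot> \<theta>'"] a b fg
            by (auto simp: unifier_def)
          have V'': "varsE (set E'') = varsE (set E)"
            unfolding VE E''_def using varsE_zip[OF len] a b by (auto simp: varsE_def)
          have "?sz E'' < ?sz E"
            using sz_zip[OF len] sum_size_less[of ss f] sum_size_less[of ts g] Cons ab a b
            by (simp add: E''_def)
          then obtain \<sigma> where "good (set E'') \<sigma>" using IH2[of E''] V'' th U'' by auto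
          then have "good (set E) \<sigma>" using good_cong[OF U'' V''[symmetric]] by simp
          then show ?thesis by blast
        qed
      qed
    qed
  qed
qed

lemma mgu_exists: "finite E \<Longrightarrow> unifier E \<theta> \<Longrightarrow> \<exists>\<sigma>. good E \<sigma>"
  using mgu_list finite_list by blast



lemma rename1:
  assumes inf: "infinite (UNIV :: 'v set)" and A: "finite (A :: 'v set)" and U: "finite (U :: 'v set)"
  shows "\<exists>\<pi>. bij \<pi> \<and> \<pi> ` A \<inter> U = {}"
proof -
  have "infinite (UNIV - (A \<union> U))" using inf A U by auto
  then obtain B where B: "B \<subseteq> UNIV - (A \<union> U)" "finite B" "card B = card A"
    using infinite_arbitrarily_large by blast
  obtain h where h: "bij_betw h A B" using finite_same_card_bij[OF A B(2) B(3)[symmetric]] by blast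
  define \<pi> where "\<pi> x = (if x \<in> A then h x else if x \<in> B then inv_into A h x else x)" for x
  have AB: "A \<inter> B = {}" using B by auto
  have inv1: "\<pi> (\<pi> x) = x" for x
  proof (cases "x \<in> A")
    case True
    then have "h x \<in> B" using h by (auto simp: bij_betw_def)
    then show ?thesis using True AB h by (auto simp: \<pi>_def bij_betw_def)
  next
    case False
    show ?thesis
    proof (cases "x \<in> B")
      case True
      then have "inv_into A h x \<in> A" using h by (metis bij_betw_def inv_into_into)
      moreover have "h (inv_into A h x) = x" using True h by (metis bij_betw_def f_inv_into_f)
      ultimately show ?thesis using True False by (auto simp: \<pi>_def)
    next
      case False
      then show ?thesis using \<open>x \<notin> A\<close> by (auto simp: \<pi>_def)
    qed
  qed
  have "bij \<pi>" by (rule o_bij[of \<pi>]) (auto simp: inv1)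
  moreover have "\<pi> ` A \<inter> U = {}"
  proof -
    have "\<pi> ` A = h ` A" by (auto simp: \<pi>_def)
    also have "\<dots> = B" using h by (simp add: bij_betw_def)
    finally show ?thesis using B by auto
  qed
  ultimately show ?thesis by blast
qed

lemma rename_family:
  assumes inf: "infinite (UNIV :: 'v set)" and I: "finite I" and W: "\<forall>i\<in>I. finite (W i :: 'v set)" and U: "finite (U :: 'v set)"
  shows "\<exists>\<pi>. (\<forall>i\<in>I. bij (\<pi> i)) \<and> (\<forall>i\<in>I. \<pi> i ` W i \<inter> U = {}) \<and>
     (\<forall>i\<in>I. \<forall>j\<in>I. i \<noteq> j \<longrightarrow> \<pi> i ` W i \<inter> \<pi> j ` W j = {})"
  using I W
proof (induction I rule: finite_induct)
  case empty then show ?case by auto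
next
  case (insert k F)
  then obtain \<pi> where \<pi>: "\<forall>i\<in>F. bij (\<pi> i)" "\<forall>i\<in>F. \<pi> i ` W i \<inter> U = {}"
     "\<forall>i\<in>F. \<forall>j\<in>F. i \<noteq> j \<longrightarrow> \<pi> i ` W i \<inter> \<pi> j ` W j = {}" by auto
  have "finite (U \<union> (\<Union>i\<in>F. \<pi> i ` W i))" using insert U by auto
  from rename1[OF inf _ this, of "W k"] insert obtain \<pi>k where
    k: "bij \<pi>k" "\<pi>k ` W k \<inter> (U \<union> (\<Union>i\<in>F. \<pi> i ` W i)) = {}" by auto
  have k2: "\<forall>j\<in>F. \<pi>k ` W k \<inter> \<pi> j ` W j = {}" using k(2) by blast
  have k3: "\<pi>k ` W k \<inter> U = {}" using k(2) by blast
  let ?\<pi> = "\<pi>(k := \<pi>k)"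
  have "\<forall>i\<in>insert k F. \<forall>j\<in>insert k F. i \<noteq> j \<longrightarrow> ?\<pi> i ` W i \<inter> ?\<pi> j ` W j = {}"
  proof (intro ballI impI)
    fix i j assume "i \<in> insert k F" "j \<in> insert k F" "i \<noteq> j"
    then consider "i = k" "j \<in> F" | "j = k" "i \<in> F" | "i \<in> F" "j \<in> F" "i \<noteq> k" "j \<noteq> k" by blast
    then show "?\<pi> i ` W i \<inter> ?\<pi> j ` W j = {}"
    proof cases
      case 1 then show ?thesis using k2 insert.hyps by auto
    next
      case 2 then show ?thesis using k2 insert.hyps by auto
    next
      case 3 then show ?thesis using \<pi>(3) \<open>i \<noteq> j\<close> by auto
    qed
  qed
  then show ?case
    by (intro exI[of _ ?\<pi>] conjI) (use \<pi> k k3 insert.hyps in auto)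
qed

lemma vars_rename: "vars_term (t \<cdot> (Var \<circ> \<pi>)) = \<pi> ` vars_term t"
  by (auto simp: vars_subst)

lemma rename_comp: "t \<cdot> (Var \<circ> f) \<cdot> (Var \<circ> g) = t \<cdot> (Var \<circ> (g \<circ> f))"
  by (simp add: subst_subst subst_comp_def comp_def)

lemma rename_inv: "bij \<pi> \<Longrightarrow> t \<cdot> (Var \<circ> \<pi>) \<cdot> (Var \<circ> inv \<pi>) = t"
  by (simp add: rename_comp bij_is_inj)

lemma variant_trans_inv:
  assumes "bij \<pi>" "variant (fst lr \<cdot> (Var \<circ> \<pi>), snd lr \<cdot> (Var \<circ> \<pi>)) lr'"
  shows "variant lr lr'"
proof -
  from assms(2) obtain \<psi> where \<psi>: "bij \<psi>" "fst lr \<cdot> (Var \<circ> \<pi>) = fst lr' \<cdot> (Var \<circ> \<psi>)"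
    "snd lr \<cdot> (Var \<circ> \<pi>) = snd lr' \<cdot> (Var \<circ> \<psi>)" by (auto simp: variant_def)
  have "fst lr = fst lr' \<cdot> (Var \<circ> (inv \<pi> \<circ> \<psi>))"
    using rename_inv[OF assms(1), of "fst lr"] \<psi>(2) by (simp add: rename_comp)
  moreover have "snd lr = snd lr' \<cdot> (Var \<circ> (inv \<pi> \<circ> \<psi>))"
    using rename_inv[OF assms(1), of "snd lr"] \<psi>(3) by (simp add: rename_comp)
  moreover have "bij (inv \<pi> \<circ> \<psi>)" using assms(1) \<psi>(1) by (simp add: bij_comp bij_imp_bij_inv)
  ultimately show ?thesis unfolding variant_def by blast
qed



lemma par_step_refl: "par_step R {} u u"
  unfolding par_step_def par_step_with_def pairwise_parallel_def by simp

lemma part_a: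
  fixes R :: "('f, 'v) rule set" and l r :: "('f, 'v) term"
  assumes rule: "wf_rule (l, r)" and ll: "left_linear_rule (l, r)"
    and P: "P \<subseteq> poss s" "pairwise_parallel P"
    and rules: "\<forall>p\<in>P. rl p \<in> R \<and> (\<exists>\<mu>. s |_ p = fst (rl p) \<cdot> \<mu> \<and> t |_ p = snd (rl p) \<cdot> \<mu>)"
    and t: "t = par_replace s P (\<lambda>p. t |_ p)"
    and wfR: "\<forall>p\<in>P. vars_term (snd (rl p)) \<subseteq> vars_term (fst (rl p))"
    and su: "s = l \<cdot> \<mu>" "u = r \<cdot> \<mu>"
    and orth: "orthogonal_peak (l, r) P rl"
  shows "\<exists>v P'. (t = v \<or> root_step {(l, r)} t v) \<and> par_step R P' u v \<and> vars_at v P' \<subseteq> vars_at s P"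
proof (cases "P \<inter> fun_poss l = {}")
  case True
  have lin: "left_linear_term l" using ll by (simp add: left_linear_rule_def)
  from core[OF lin P(1)[unfolded su] P(2) True, of "\<lambda>p. t |_ p"] obtain \<rho> where
    \<rho>: "par_replace (l \<cdot> \<mu>) P (\<lambda>p. t |_ p) = l \<cdot> \<rho>"
       "\<forall>x\<in>vars_term l. \<exists>q. q \<in> poss l \<and> l |_ q = Var x \<and>
            \<rho> x = par_replace (\<mu> x) {p'. q @ p' \<in> P} (\<lambda>p'. t |_ (q @ p'))" by blast
  have tl: "t = l \<cdot> \<rho>" using t \<rho>(1) su by simp
  have rl: "vars_term r \<subseteq> vars_term l" using rule by (simp add: wf_rule_def)
  have "\<forall>x\<in>vars_term r. \<exists>Q rl'. par_step_with R Q rl' (\<mu> x) (\<rho> x) \<and> vars_at (\<rho> x) Q \<subseteq> vars_at s P"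
  proof
    fix x assume "x \<in> vars_term r"
    with rl \<rho>(2) obtain q where q: "q \<in> poss l" "l |_ q = Var x"
      "\<rho> x = par_replace (\<mu> x) {p'. q @ p' \<in> P} (\<lambda>p'. t |_ (q @ p'))" by blast
    have rules': "\<forall>p\<in>P. rl p \<in> R \<and> (\<exists>\<mu>'. (l \<cdot> \<mu>) |_ p = fst (rl p) \<cdot> \<mu>' \<and> t |_ p = snd (rl p) \<cdot> \<mu>')"
      using rules su by simp
    note S = sub_step[OF P(1)[unfolded su] P(2) rules' q(1,2)]
    show "\<exists>Q rl'. par_step_with R Q rl' (\<mu> x) (\<rho> x) \<and> vars_at (\<rho> x) Q \<subseteq> vars_at s P"
      apply (rule exI[of _ "{p'. q @ p' \<in> P}"], rule exI[of _ "\<lambda>p'. rl (q @ p')"])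
      using S(1) S(2)[OF wfR] q(3) su by simp
  qed
  from par_step_subst[OF this] obtain P' rl' where
    "par_step_with R P' rl' (r \<cdot> \<mu>) (r \<cdot> \<rho>)" "vars_at (r \<cdot> \<rho>) P' \<subseteq> vars_at s P" by blast
  moreover have "root_step {(l, r)} t (r \<cdot> \<rho>)" using tl by (auto simp: root_step_def)
  ultimately show ?thesis using su by (auto simp: par_step_def)
next
  case False
  from orth False have "P = {[]} \<and> variant (rl []) (l, r)" by (simp add: orthogonal_peak_def)
  then have P1: "P = {[]}" and var: "variant (rl []) (l, r)" by auto
  have "\<exists>\<mu>. s |_ [] = fst (rl []) \<cdot> \<mu> \<and> t |_ [] = snd (rl []) \<cdot> \<mu>" using rules P1 by blast
  then obtain \<mu>e where e: "s = fst (rl []) \<cdot> \<mu>e" "t = snd (rl []) \<cdot> \<mu>e" by auto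
  from var obtain \<pi> where \<pi>: "fst (rl []) = l \<cdot> (Var \<circ> \<pi>)" "snd (rl []) = r \<cdot> (Var \<circ> \<pi>)"
    unfolding variant_def by auto
  have eq: "l \<cdot> subst_comp (Var \<circ> \<pi>) \<mu>e = l \<cdot> \<mu>" using e(1) \<pi>(1) su(1) by (simp add: subst_subst)
  have rl: "vars_term r \<subseteq> vars_term l" using rule by (simp add: wf_rule_def)
  have "r \<cdot> subst_comp (Var \<circ> \<pi>) \<mu>e = r \<cdot> \<mu>"
    by (rule term_subst_eq, rule term_subst_eq_rev[OF eq]) (use rl in blast)
  then have tu: "t = u" using e(2) \<pi>(2) su(2) by (simp add: subst_subst)
  have "vars_at t {} \<subseteq> vars_at s P" by (simp add: vars_at_def)
  then show ?thesis using par_step_refl[of R u] tu by blast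
qed




lemma part_b:
  fixes R :: "('f, 'v) rule set" and l r :: "('f, 'v) term"
  assumes inf: "infinite (UNIV :: 'v set)"
    and rule: "wf_rule (l, r)" and ll: "left_linear_rule (l, r)"
    and par: "par_step_with R P rl s t"
    and wfR: "\<forall>p\<in>P. vars_term (snd (rl p)) \<subseteq> vars_term (fst (rl p))"
    and su: "s = l \<cdot> \<mu>" "u = r \<cdot> \<mu>"
    and orth: "\<not> orthogonal_peak (l, r) P rl"
  shows "\<exists>t0 P0 s0 u0 \<sigma> \<tau>. par_crit_peak R {(l, r)} t0 P0 s0 u0 \<and>
                s = s0 \<cdot> \<sigma> \<and> t = t0 \<cdot> \<tau> \<and> u = u0 \<cdot> \<sigma> \<and>
                par_subst R \<sigma> \<tau> \<and>
                par_step R (P - P0) (t0 \<cdot> \<sigma>) (t0 \<cdot> \<tau>) \<and> P0 \<subseteq> P"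
proof -
  from par have P: "P \<subseteq> poss s" "pairwise_parallel P"
    and rules: "\<forall>p\<in>P. rl p \<in> R \<and> (\<exists>\<mu>. s |_ p = fst (rl p) \<cdot> \<mu> \<and> t |_ p = snd (rl p) \<cdot> \<mu>)"
    and t: "t = par_replace s P (\<lambda>p. t |_ p)"
    unfolding par_step_with_def by auto
  have lin: "left_linear_term l" using ll by (simp add: left_linear_rule_def)
  have rl_sub: "vars_term r \<subseteq> vars_term l" using rule by (simp add: wf_rule_def)
  define P0 where "P0 = P \<inter> fun_poss l"
  have P0ne: "P0 \<noteq> {}" using orth by (auto simp: orthogonal_peak_def P0_def)
  have P0P: "P0 \<subseteq> P" by (simp add: P0_def)
  have P0l: "P0 \<subseteq> poss l" using fun_poss_poss by (auto simp: P0_def)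
  have finP0: "finite P0" using finite_fun_poss[of l] by (simp add: P0_def)
  define W where "W p = rule_vars (rl p)" for p
  define U where "U = rule_vars (l, r)"
  have finW: "\<forall>p\<in>P0. finite (W p)" by (simp add: W_def rule_vars_def)
  have finU: "finite U" by (simp add: U_def rule_vars_def)
  from rename_family[OF inf finP0 finW finU] obtain \<pi> where
    \<pi>: "\<forall>p\<in>P0. bij (\<pi> p)" "\<forall>p\<in>P0. \<pi> p ` W p \<inter> U = {}"
       "\<forall>p\<in>P0. \<forall>q\<in>P0. p \<noteq> q \<longrightarrow> \<pi> p ` W p \<inter> \<pi> q ` W q = {}"
    by (elim exE conjE) (rule that)
  define rl' where "rl' p = (fst (rl p) \<cdot> (Var \<circ> \<pi> p), snd (rl p) \<cdot> (Var \<circ> \<pi> p))" for p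
  have "\<forall>p\<in>P. \<exists>\<mu>. s |_ p = fst (rl p) \<cdot> \<mu> \<and> t |_ p = snd (rl p) \<cdot> \<mu>" using rules by simp
  from bchoice[OF this] obtain M where M: "\<forall>p\<in>P. s |_ p = fst (rl p) \<cdot> M p \<and> t |_ p = snd (rl p) \<cdot> M p"
    by (elim exE) (rule that)
  define pz where "pz z = (SOME p. p \<in> P0 \<and> z \<in> \<pi> p ` W p)" for z
  define \<theta> where "\<theta> z = (if \<exists>p\<in>P0. z \<in> \<pi> p ` W p then M (pz z) (inv (\<pi> (pz z)) z) else \<mu> z)" for z
  have th1: "\<theta> (\<pi> p y) = M p y" if "p \<in> P0" "y \<in> W p" for p y
  proof -
    have ex: "\<exists>p'. p' \<in> P0 \<and> \<pi> p y \<in> \<pi> p' ` W p'" by (rule exI[of _ p]) (use that in auto)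
    have sp: "pz (\<pi> p y) \<in> P0 \<and> \<pi> p y \<in> \<pi> (pz (\<pi> p y)) ` W (pz (\<pi> p y))"
      unfolding pz_def by (rule someI_ex[OF ex])
    have "pz (\<pi> p y) = p"
    proof (rule ccontr)
      assume ne: "pz (\<pi> p y) \<noteq> p"
      have d: "\<pi> (pz (\<pi> p y)) ` W (pz (\<pi> p y)) \<inter> \<pi> p ` W p = {}"
        using \<pi>(3) sp that(1) ne by simp
      have "\<pi> p y \<in> \<pi> p ` W p" using that(2) by (rule imageI)
      with sp d show False by (simp add: disjoint_iff)
    qed
    moreover have "inv (\<pi> p) (\<pi> p y) = y" using \<pi>(1) that bij_is_inj inv_f_f by metis
    moreover have c: "\<exists>p'\<in>P0. \<pi> p y \<in> \<pi> p' ` W p'" using that by auto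
    ultimately show ?thesis unfolding \<theta>_def by simp
  qed
  have th2: "\<theta> z = \<mu> z" if "z \<in> U" for z
    using that \<pi>(2) by (auto simp: \<theta>_def)
  have lU: "vars_term l \<subseteq> U" by (simp add: U_def rule_vars_def)
  have fstW: "vars_term (fst (rl p)) \<subseteq> W p" "vars_term (snd (rl p)) \<subseteq> W p" for p
    by (auto simp: W_def rule_vars_def)
  have rl'_th: "fst (rl' p) \<cdot> \<theta> = fst (rl p) \<cdot> M p" "snd (rl' p) \<cdot> \<theta> = snd (rl p) \<cdot> M p" if "p \<in> P0" for p
    using that fstW[of p] th1[OF that] by (auto simp: rl'_def subst_subst subst_comp_def intro!: term_subst_eq)
  have l\<theta>: "l \<cdot> \<theta> = l \<cdot> \<mu>" by (rule term_subst_eq) (use lU th2 in auto)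
  have r\<theta>: "r \<cdot> \<theta> = r \<cdot> \<mu>" by (rule term_subst_eq) (use lU rl_sub th2 in auto)
  define E where "E = (\<lambda>p. (fst (rl' p), l |_ p)) ` P0"
  have unif: "unifier E \<theta>"
    unfolding unifier_def E_def
  proof (intro ballI, clarify)
    fix p assume p: "p \<in> P0"
    have "fst (rl' p) \<cdot> \<theta> = s |_ p" using rl'_th[OF p] M P0P p by auto
    also have "\<dots> = (l |_ p) \<cdot> \<mu>" using su poss_subst P0l p by auto
    also have "\<dots> = (l |_ p) \<cdot> \<theta>"
    proof -
    have "vars_term (l |_ p) \<subseteq> U" using vars_subt[of p l] P0l p lU by auto
    then show "(l |_ p) \<cdot> \<mu> = (l |_ p) \<cdot> \<theta>"
      by (intro term_subst_eq) (simp add: th2 subset_iff)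
    qed
    finally show "fst (rl' p) \<cdot> \<theta> = (l |_ p) \<cdot> \<theta>" .
  qed
  from mgu_exists[OF _ unif] finP0 obtain \<sigma>0 where g: "good E \<sigma>0" by (auto simp: E_def)
  then obtain \<delta> where \<delta>: "\<theta> = subst_comp \<sigma>0 \<delta>" using unif by (auto simp: good_def mgu_def)
  define X where "X = vars_term l - (\<Union>p\<in>P0. vars_term (l |_ p))"
  have VEX: "varsE E \<inter> X = {}"
  proof -
    have "vars_term (fst (rl' p)) \<inter> U = {}" if "p \<in> P0" for p
      using \<pi>(2) that fstW[of p] by (auto simp: rl'_def vars_rename)
    then show ?thesis using lU by (auto simp: varsE_def E_def X_def)
  qed
  have F1: "\<sigma>0 x = Var x" "\<delta> x = \<mu> x" if "x \<in> X" for x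
  proof -
    show "\<sigma>0 x = Var x" using g VEX that by (auto simp: good_def)
    then show "\<delta> x = \<mu> x" using \<delta> th2[of x] that lU by (auto simp: subst_comp_def X_def dest: fun_cong[of _ _ x])
  qed
  have F3: "vars_term (\<sigma>0 z) \<inter> X = {}" if "z \<in> varsE E" for z
    using g that VEX by (auto simp: good_def)
  have Q: "P - P0 \<subseteq> poss (l \<cdot> \<mu>)" "pairwise_parallel (P - P0)" "(P - P0) \<inter> fun_poss l = {}"
    using P su pp_mono by (auto simp: P0_def)
  from core[OF lin Q, of "\<lambda>p. t |_ p"] obtain \<rho> where
    \<rho>: "par_replace (l \<cdot> \<mu>) (P - P0) (\<lambda>p. t |_ p) = l \<cdot> \<rho>"
       "\<forall>x\<in>vars_term l. \<exists>q. q \<in> poss l \<and> l |_ q = Var x \<and>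
            \<rho> x = par_replace (\<mu> x) {p'. q @ p' \<in> P - P0} (\<lambda>p'. t |_ (q @ p'))"
    by (elim exE conjE) (rule that)
  have F2: "\<rho> x = \<mu> x" if x: "x \<in> vars_term l" "x \<notin> X" for x
  proof -
    from x obtain p0 where p0: "p0 \<in> P0" "x \<in> vars_term (l |_ p0)" by (auto simp: X_def)
    from vars_poss[OF p0(2)] obtain q' where q': "q' \<in> poss (l |_ p0)" "l |_ p0 |_ q' = Var x" by (elim bexE) (rule that)
    have q'': "p0 @ q' \<in> poss l" "l |_ (p0 @ q') = Var x"
      using q' P0l p0 by (auto simp: poss_append subt_at_append)
    from \<rho>(2)[rule_format, OF x(1)] obtain q where q: "q \<in> poss l" "l |_ q = Var x"
      "\<rho> x = par_replace (\<mu> x) {p'. q @ p' \<in> P - P0} (\<lambda>p'. t |_ (q @ p'))" by (elim exE conjE) (rule that)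
    have "q = p0 @ q'" using lin[unfolded left_linear_term_def, rule_format, of q "p0 @ q'" x] q(1,2) q'' by simp
    have e: "{p'. q @ p' \<in> P - P0} = {}"
    proof (rule ccontr)
      assume "{p'. q @ p' \<in> P - P0} \<noteq> {}"
      then obtain p' where p': "q @ p' \<in> P" "q @ p' \<notin> P0" by auto
      have "p0 \<in> P" "p0 \<noteq> q @ p'" using p0 P0P p' by auto
      then have "parallel_pos p0 (q @ p')" using P(2)[unfolded pairwise_parallel_def, rule_format, of p0 "q @ p'"] p' by simp
      then show False using \<open>q = p0 @ q'\<close> by (simp add: parallel_pos_def)
    qed
    show ?thesis using q(3)[unfolded e] by simp
  qed
  define \<tau> where "\<tau> z = (if z \<in> X then \<rho> z else \<delta> z)" for z
  have rl'_vars: "vars_term (snd (rl' p)) \<subseteq> varsE E" if "p \<in> P0" for p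
  proof -
    have "vars_term (snd (rl' p)) \<subseteq> vars_term (fst (rl' p))"
      using wfR that P0P by (auto simp: rl'_def vars_rename)
    then show ?thesis using that by (auto simp: varsE_def E_def)
  qed
  define s0 where "s0 = l \<cdot> \<sigma>0"
  define u0 where "u0 = r \<cdot> \<sigma>0"
  define t0 where "t0 = par_replace (l \<cdot> \<sigma>0) P0 (\<lambda>p. snd (rl' p) \<cdot> \<sigma>0)"
  have s: "s = s0 \<cdot> \<delta>" using l\<theta> su \<delta> by (simp add: s0_def subst_subst)
  have u: "u = u0 \<cdot> \<delta>" using r\<theta> su \<delta> by (simp add: u0_def subst_subst)
  have P0l\<sigma>: "P0 \<subseteq> poss (l \<cdot> \<sigma>0)"
  proof
    fix p assume "p \<in> P0" then show "p \<in> poss (l \<cdot> \<sigma>0)" using poss_subst[of p l \<sigma>0] P0l by auto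
  qed
  have snd_t: "snd (rl' p) \<cdot> \<sigma>0 \<cdot> \<delta> = t |_ p" if "p \<in> P0" for p
    using rl'_th(2)[OF that] M that P0P \<delta> by (auto simp: subst_subst)
  have t0\<delta>: "t0 \<cdot> \<delta> = par_replace s P0 (\<lambda>p. t |_ p)"
  proof -
    have "t0 \<cdot> \<delta> = par_replace (l \<cdot> \<sigma>0 \<cdot> \<delta>) P0 (\<lambda>p. snd (rl' p) \<cdot> \<sigma>0 \<cdot> \<delta>)"
      unfolding t0_def by (rule pr_subst[OF P0l\<sigma>])
    also have "\<dots> = par_replace s P0 (\<lambda>p. t |_ p)"
      using s snd_t by (auto simp: s0_def intro!: pr_cong)
    finally show ?thesis .
  qed
  have l\<sigma>\<tau>: "l \<cdot> \<sigma>0 \<cdot> \<tau> = l \<cdot> \<rho>"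
    unfolding subst_subst
  proof (rule term_subst_eq)
    fix x assume x: "x \<in> vars_term l"
    show "subst_comp \<sigma>0 \<tau> x = \<rho> x"
    proof (cases "x \<in> X")
      case True then show ?thesis using F1 by (simp add: subst_comp_def \<tau>_def)
    next
      case False
      then have xE: "x \<in> varsE E" using x by (auto simp: X_def varsE_def E_def)
      have "\<sigma>0 x \<cdot> \<tau> = \<sigma>0 x \<cdot> \<delta>"
        by (rule term_subst_eq) (use F3[OF xE] in \<open>auto simp: \<tau>_def\<close>)
      also have "\<dots> = \<theta> x" by (simp add: \<delta> subst_comp_def)
      also have "\<dots> = \<mu> x" using th2 lU x by auto
      also have "\<dots> = \<rho> x" using F2[OF x False] by simp
      finally show ?thesis by (simp add: subst_comp_def)
    qed
  qed
  have snd_\<tau>: "snd (rl' p) \<cdot> \<sigma>0 \<cdot> \<tau> = t |_ p" if p: "p \<in> P0" for p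
  proof -
    have "snd (rl' p) \<cdot> \<sigma>0 \<cdot> \<tau> = snd (rl' p) \<cdot> \<sigma>0 \<cdot> \<delta>"
    proof (rule term_subst_eq)
      fix y assume "y \<in> vars_term (snd (rl' p) \<cdot> \<sigma>0)"
      then obtain z where "z \<in> vars_term (snd (rl' p))" "y \<in> vars_term (\<sigma>0 z)" by (auto simp: vars_subst)
      then have "y \<notin> X" using F3[of z] rl'_vars[OF p] by auto
      then show "\<tau> y = \<delta> y" by (simp add: \<tau>_def)
    qed
    then show ?thesis using snd_t[OF p] by simp
  qed
  have t0\<tau>: "t0 \<cdot> \<tau> = t"
  proof -
    have "t0 \<cdot> \<tau> = par_replace (l \<cdot> \<sigma>0 \<cdot> \<tau>) P0 (\<lambda>p. snd (rl' p) \<cdot> \<sigma>0 \<cdot> \<tau>)"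
      unfolding t0_def by (rule pr_subst[OF P0l\<sigma>])
    also have "\<dots> = par_replace (l \<cdot> \<rho>) P0 (\<lambda>p. t |_ p)"
      using l\<sigma>\<tau> snd_\<tau> by (auto intro!: pr_cong)
    also have "\<dots> = par_replace (par_replace s (P - P0) (\<lambda>p. t |_ p)) (P - (P - P0)) (\<lambda>p. t |_ p)"
      using \<rho>(1) su P0P by (simp add: Diff_Diff_Int Int_absorb1)
    also have "\<dots> = par_replace s P (\<lambda>p. t |_ p)"
      by (rule pr_split[OF P]) auto
    finally show ?thesis using t by simp
  qed
  have ps: "par_step R (P - P0) (t0 \<cdot> \<delta>) (t0 \<cdot> \<tau>)"
    unfolding t0\<delta> t0\<tau> par_step_def using par_step_part[OF par P0P] by blast
  have psub: "par_subst R \<delta> \<tau>"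
    unfolding par_subst_def par_rstep_def
  proof
    fix z
    show "\<exists>P. par_step R P (\<delta> z) (\<tau> z)"
    proof (cases "z \<in> X")
      case False then show ?thesis using par_step_refl by (auto simp: \<tau>_def)
    next
      case True
      then have z: "z \<in> vars_term l" by (simp add: X_def)
      from \<rho>(2)[rule_format, OF z] obtain q where q: "q \<in> poss l" "l |_ q = Var z"
        "\<rho> z = par_replace (\<mu> z) {p'. q @ p' \<in> P - P0} (\<lambda>p'. t |_ (q @ p'))" by (elim exE conjE) (rule that)
      have rules': "\<forall>p\<in>P - P0. rl p \<in> R \<and> (\<exists>\<mu>'. (l \<cdot> \<mu>) |_ p = fst (rl p) \<cdot> \<mu>' \<and> t |_ p = snd (rl p) \<cdot> \<mu>')"
        using rules su by simp
      note S = sub_step(1)[OF Q(1,2) rules' q(1,2)]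
      have "\<tau> z = \<rho> z" "\<delta> z = \<mu> z" using True F1 by (auto simp: \<tau>_def)
      then show ?thesis using S q(3) unfolding par_step_def by auto
    qed
  qed
  have cp: "par_crit_peak R {(l, r)} t0 P0 s0 u0"
    unfolding par_crit_peak_def
  proof (rule exI[of _ l], rule exI[of _ r], rule exI[of _ rl'], rule exI[of _ \<sigma>0], intro conjI)
    show "\<exists>lr\<in>{(l, r)}. variant (l, r) lr"
      by (auto simp: variant_def intro!: exI[of _ id])
    show "P0 \<subseteq> fun_poss l" by (simp add: P0_def)
    show "P0 \<noteq> {}" by (rule P0ne)
    show "pairwise_parallel P0" using pp_mono[OF P(2) P0P] .
    show "\<forall>p\<in>P0. \<exists>lr\<in>R. variant (rl' p) lr"
    proof
      fix p assume p: "p \<in> P0"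
      then have "rl p \<in> R" using rules P0P by auto
      moreover have "variant (rl' p) (rl p)" using \<pi>(1) p by (auto simp: variant_def rl'_def)
      ultimately show "\<exists>lr\<in>R. variant (rl' p) lr" by (rule bexI[rotated])
    qed
    have rv: "rule_vars (rl' p) = \<pi> p ` W p" for p
      by (auto simp: rule_vars_def rl'_def W_def vars_rename)
    show "\<forall>p\<in>P0. rule_vars (rl' p) \<inter> rule_vars (l, r) = {}"
      using \<pi>(2) by (simp add: rv U_def)
    show "\<forall>p\<in>P0. \<forall>q\<in>P0. p \<noteq> q \<longrightarrow> rule_vars (rl' p) \<inter> rule_vars (rl' q) = {}"
      using \<pi>(3) by (simp add: rv)
    show "mgu ((\<lambda>p. (fst (rl' p), l |_ p)) ` P0) \<sigma>0" using g by (simp add: good_def E_def)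
    show "P0 = {[]} \<longrightarrow> \<not> variant (rl' []) (l, r)"
    proof
      assume P01: "P0 = {[]}"
      then have "[] \<in> P" using P0P by auto
      then have "P = {[]}" using pp_Nil[OF P(2)] by simp
      then have "\<not> variant (rl []) (l, r)" using orth by (simp add: orthogonal_peak_def)
      then show "\<not> variant (rl' []) (l, r)"
        using variant_trans_inv[of "\<pi> []" "rl []" "(l, r)"] \<pi>(1) P01 by (auto simp: rl'_def)
    qed
  qed (simp_all add: s0_def t0_def u0_def)
  show ?thesis
    by (rule exI[of _ t0], rule exI[of _ P0], rule exI[of _ s0], rule exI[of _ u0], rule exI[of _ \<delta>],
        rule exI[of _ \<tau>]) (use cp s t0\<tau> u psub ps P0P in simp)
qed


theorem lemma3:
  fixes R :: "('f, 'v) rule set" and l r :: "('f, 'v) term"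
    and P :: "pos set" and rl :: "pos \<Rightarrow> ('f, 'v) rule"
    and s t u :: "('f, 'v) term"
  assumes inf_vars: "infinite (UNIV :: 'v set)"
    and trs: "wf_trs R"
    and rule: "wf_rule (l, r)"
    and ll: "left_linear_rule (l, r)"
    and par: "par_step_with R P rl s t"
    and root: "root_step {(l, r)} s u"
  shows "(orthogonal_peak (l, r) P rl \<longrightarrow>
            (\<exists>v P'. (t = v \<or> root_step {(l, r)} t v) \<and> par_step R P' u v \<and>
                    vars_at v P' \<subseteq> vars_at s P))
       \<and> (\<not> orthogonal_peak (l, r) P rl \<longrightarrow>
            (\<exists>t0 P0 s0 u0 \<sigma> \<tau>. par_crit_peak R {(l, r)} t0 P0 s0 u0 \<and>
                s = s0 \<cdot> \<sigma> \<and> t = t0 \<cdot> \<tau> \<and> u = u0 \<cdot> \<sigma> \<and>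
                par_subst R \<sigma> \<tau> \<and>
                par_step R (P - P0) (t0 \<cdot> \<sigma>) (t0 \<cdot> \<tau>) \<and> P0 \<subseteq> P))"
proof -
  from root obtain \<mu> where su: "s = l \<cdot> \<mu>" "u = r \<cdot> \<mu>" by (auto simp: root_step_def)
  from par have P: "P \<subseteq> poss s" "pairwise_parallel P"
    and rules: "\<forall>p\<in>P. rl p \<in> R \<and> (\<exists>\<mu>. s |_ p = fst (rl p) \<cdot> \<mu> \<and> t |_ p = snd (rl p) \<cdot> \<mu>)"
    and t: "t = par_replace s P (\<lambda>p. t |_ p)"
    unfolding par_step_with_def by auto
  have wfR: "\<forall>p\<in>P. vars_term (snd (rl p)) \<subseteq> vars_term (fst (rl p))"
  proof
    fix p assume "p \<in> P"
    then have "rl p \<in> R" using rules by simp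
    then have "wf_rule (rl p)" using trs by (simp add: wf_trs_def)
    then show "vars_term (snd (rl p)) \<subseteq> vars_term (fst (rl p))" by (simp add: wf_rule_def)
  qed
  show ?thesis
  proof (intro conjI impI)
    assume "orthogonal_peak (l, r) P rl"
    from part_a[OF rule ll P rules t wfR su this]
    show "\<exists>v P'. (t = v \<or> root_step {(l, r)} t v) \<and> par_step R P' u v \<and> vars_at v P' \<subseteq> vars_at s P" .
  next
    assume "\<not> orthogonal_peak (l, r) P rl"
    from part_b[OF inf_vars rule ll par wfR su this]
    show "\<exists>t0 P0 s0 u0 \<sigma> \<tau>. par_crit_peak R {(l, r)} t0 P0 s0 u0 \<and>
                s = s0 \<cdot> \<sigma> \<and> t = t0 \<cdot> \<tau> \<and> u = u0 \<cdot> \<sigma> \<and>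
                par_subst R \<sigma> \<tau> \<and>
                par_step R (P - P0) (t0 \<cdot> \<sigma>) (t0 \<cdot> \<tau>) \<and> P0 \<subseteq> P" .
  qed
qed

end
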